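(* For every $s\in I(\Phi)$ there exists a Weyl chamber $C$ of $\Phi$ which is an S-chamber for $s$, i.e. such that $s(\alpha)\in\Phi^+(C)$ for every $\alpha\in\Phi^+(C)\cap\Phi^s_\star$. Equivalently, $s(\alpha)\in\Phi^+(C)$ for every $\alpha\in\mathcal B(C)\cap\Phi^s_\star$.
   Context: $\Phi$ is a reduced crystallographic root system spanning a real Euclidean space $V$ with inner product $(\cdot|\cdot)$; $A(\Phi)$ is the group of orthogonal maps of $V$ preserving $\Phi$, $I(\Phi)$ its involutions. For $s\in I(\Phi)$: $\Phi^s_\circ=\{\alpha:s\alpha=\alpha\}$, $\Phi^s_\bullet=\{\alpha:s\alpha=-\alpha\}$, $\Phi^s_\star=\Phi\setminus(\Phi^s_\circ\cup\Phi^s_\bullet)$. A Weyl chamber is a connected component $C$ of $\{v\in V:(\alpha|v)\ne0\ \forall\alpha\in\Phi\}$; $\Phi^+(C)=\{\alpha:(\alpha|v)>0\ \forall v\in C\}$ and $\mathcal B(C)$ is the corresponding basis of simple roots. *)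

theory Defs
  imports "HOL-Analysis.Analysis"
begin

definition refl_vec :: "'a::euclidean_space \<Rightarrow> 'a \<Rightarrow> 'a" where
  "refl_vec \<alpha> v = v - (2 * (v \<bullet> \<alpha>) / (\<alpha> \<bullet> \<alpha>)) *\<^sub>R \<alpha>"

definition reduced_root_system :: "'a::euclidean_space set \<Rightarrow> bool" where
  "reduced_root_system \<Phi> \<longleftrightarrow>
     finite \<Phi> \<and> 0 \<notin> \<Phi> \<and> span \<Phi> = UNIV \<and>
     (\<forall>\<alpha>\<in>\<Phi>. \<forall>\<beta>\<in>\<Phi>. refl_vec \<alpha> \<beta> \<in> \<Phi>) \<and>
     (\<forall>\<alpha>\<in>\<Phi>. \<forall>\<beta>\<in>\<Phi>. 2 * (\<beta> \<bullet> \<alpha>) / (\<alpha> \<bullet> \<alpha>) \<in> \<int>) \<and>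
     (\<forall>\<alpha>\<in>\<Phi>. \<forall>c::real. c *\<^sub>R \<alpha> \<in> \<Phi> \<longrightarrow> c = 1 \<or> c = -1)"

definition root_automorphisms :: "'a::euclidean_space set \<Rightarrow> ('a \<Rightarrow> 'a) set" where
  "root_automorphisms \<Phi> = {f. orthogonal_transformation f \<and> f ` \<Phi> = \<Phi>}"

definition root_involutions :: "'a::euclidean_space set \<Rightarrow> ('a \<Rightarrow> 'a) set" where
  "root_involutions \<Phi> = {s \<in> root_automorphisms \<Phi>. s \<circ> s = id}"

definition fixed_roots :: "'a::euclidean_space set \<Rightarrow> ('a \<Rightarrow> 'a) \<Rightarrow> 'a set" where
  "fixed_roots \<Phi> s = {\<alpha> \<in> \<Phi>. s \<alpha> = \<alpha>}"

definition neg_roots :: "'a::euclidean_space set \<Rightarrow> ('a \<Rightarrow> 'a) \<Rightarrow> 'a set" where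
  "neg_roots \<Phi> s = {\<alpha> \<in> \<Phi>. s \<alpha> = - \<alpha>}"

definition star_roots :: "'a::euclidean_space set \<Rightarrow> ('a \<Rightarrow> 'a) \<Rightarrow> 'a set" where
  "star_roots \<Phi> s = \<Phi> - (fixed_roots \<Phi> s \<union> neg_roots \<Phi> s)"

definition regular_set :: "'a::euclidean_space set \<Rightarrow> 'a set" where
  "regular_set \<Phi> = {v. \<forall>\<alpha>\<in>\<Phi>. \<alpha> \<bullet> v \<noteq> 0}"

definition weyl_chamber :: "'a::euclidean_space set \<Rightarrow> 'a set \<Rightarrow> bool" where
  "weyl_chamber \<Phi> C \<longleftrightarrow> C \<in> components (regular_set \<Phi>)"

definition pos_roots :: "'a::euclidean_space set \<Rightarrow> 'a set \<Rightarrow> 'a set" where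
  "pos_roots \<Phi> C = {\<alpha> \<in> \<Phi>. \<forall>v\<in>C. \<alpha> \<bullet> v > 0}"

definition simple_roots :: "'a::euclidean_space set \<Rightarrow> 'a set \<Rightarrow> 'a set" where
  "simple_roots \<Phi> C = {\<alpha> \<in> pos_roots \<Phi> C.
      \<not> (\<exists>\<beta>\<in>pos_roots \<Phi> C. \<exists>\<gamma>\<in>pos_roots \<Phi> C. \<alpha> = \<beta> + \<gamma>)}"

definition S_chamber :: "'a::euclidean_space set \<Rightarrow> ('a \<Rightarrow> 'a) \<Rightarrow> 'a set \<Rightarrow> bool" where
  "S_chamber \<Phi> s C \<longleftrightarrow> weyl_chamber \<Phi> C \<and>
     (\<forall>\<alpha> \<in> pos_roots \<Phi> C \<inter> star_roots \<Phi> s. s \<alpha> \<in> pos_roots \<Phi> C)"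

end

theory Submission
  imports Defs
begin

lemma avoid_hyperplanes:
  fixes A :: "'a::euclidean_space set"
  assumes "finite A" "0 \<notin> A"
  shows "\<exists>v. \<forall>a\<in>A. a \<bullet> v \<noteq> 0"
  using assms
proof (induction A rule: finite_induct)
  case empty then show ?case by auto
next
  case (insert b A)
  then obtain v where v: "\<forall>a\<in>A. a \<bullet> v \<noteq> 0" by auto
  have b0: "b \<noteq> 0" using insert by auto
  have "finite (insert 0 ((\<lambda>a. - (a \<bullet> v) / (a \<bullet> b)) ` A))" using insert by auto
  then obtain e :: real where e: "e \<notin> insert 0 ((\<lambda>a. - (a \<bullet> v) / (a \<bullet> b)) ` A)"
    using ex_new_if_finite infinite_UNIV_char_0 by blast
  show ?case
  proof (cases "b \<bullet> v = 0")
    case False then show ?thesis using v by auto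
  next
    case True
    have "\<forall>a\<in>insert b A. a \<bullet> (v + e *\<^sub>R b) \<noteq> 0"
    proof
      fix a assume a: "a \<in> insert b A"
      show "a \<bullet> (v + e *\<^sub>R b) \<noteq> 0"
      proof (cases "a = b")
        case True
        then show ?thesis using \<open>b \<bullet> v = 0\<close> e b0 by (simp add: inner_add_right)
      next
        case False
        then have aA: "a \<in> A" using a by auto
        show ?thesis
        proof (cases "a \<bullet> b = 0")
          case True then show ?thesis using v aA by (simp add: inner_add_right)
        next
          case False
          show ?thesis
          proof
            assume "a \<bullet> (v + e *\<^sub>R b) = 0"
            then have "a \<bullet> v + e * (a \<bullet> b) = 0" by (simp add: inner_add_right)
            then have "e = - (a \<bullet> v) / (a \<bullet> b)" using False by (simp add: field_simps)
            then show False using e aA by auto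
          qed
        qed
      qed
    qed
    then show ?thesis by blast
  qed
qed

lemma sign_lemma:
  fixes \<Phi> :: "'a::euclidean_space set"
  assumes C: "C \<in> components (regular_set \<Phi>)" and v0: "v0 \<in> C" and b: "\<beta> \<in> \<Phi>"
    and pos: "\<beta> \<bullet> v0 > 0"
  shows "\<beta> \<in> pos_roots \<Phi> C"
proof -
  have "\<forall>v\<in>C. \<beta> \<bullet> v > 0"
  proof (rule ccontr)
    assume "\<not> (\<forall>v\<in>C. \<beta> \<bullet> v > 0)"
    then obtain v where v: "v \<in> C" "\<beta> \<bullet> v \<le> 0" by auto
    have "\<exists>z\<in>C. \<beta> \<bullet> z = 0"
      using connected_ivt_hyperplane[OF in_components_connected[OF C] v(1) v0, of \<beta> 0] v pos by auto
    then obtain z where "z \<in> C" "\<beta> \<bullet> z = 0" by auto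
    moreover have "z \<in> regular_set \<Phi>" using in_components_subset[OF C] \<open>z \<in> C\<close> by auto
    ultimately show False using b unfolding regular_set_def by auto
  qed
  then show ?thesis using b unfolding pos_roots_def by auto
qed

lemma nonpos_neg:
  fixes \<Phi> :: "'a::euclidean_space set"
  assumes C: "C \<in> components (regular_set \<Phi>)" and v0: "v0 \<in> C" and b: "\<beta> \<in> \<Phi>"
    and np: "\<beta> \<notin> pos_roots \<Phi> C"
  shows "\<beta> \<bullet> v0 < 0"
proof -
  have "v0 \<in> regular_set \<Phi>" using in_components_subset[OF C] v0 by auto
  then have "\<beta> \<bullet> v0 \<noteq> 0" using b unfolding regular_set_def by auto
  moreover have "\<not> \<beta> \<bullet> v0 > 0" using sign_lemma[OF C v0 b] np by auto
  ultimately show ?thesis by auto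
qed

lemma small_t:
  fixes \<Phi> :: "'a::euclidean_space set"
  assumes "finite \<Phi>"
  shows "\<exists>t>0. \<forall>\<alpha>\<in>\<Phi>. \<alpha> \<bullet> p \<noteq> 0 \<longrightarrow> t * \<bar>\<alpha> \<bullet> w\<bar> < \<bar>\<alpha> \<bullet> p\<bar>"
proof -
  have "\<forall>\<alpha>\<in>\<Phi>. eventually (\<lambda>t::real. \<alpha> \<bullet> p \<noteq> 0 \<longrightarrow> t * \<bar>\<alpha> \<bullet> w\<bar> < \<bar>\<alpha> \<bullet> p\<bar>) (at_right 0)"
  proof
    fix \<alpha> assume "\<alpha> \<in> \<Phi>"
    show "eventually (\<lambda>t::real. \<alpha> \<bullet> p \<noteq> 0 \<longrightarrow> t * \<bar>\<alpha> \<bullet> w\<bar> < \<bar>\<alpha> \<bullet> p\<bar>) (at_right 0)"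
    proof (cases "\<alpha> \<bullet> p = 0")
      case True then show ?thesis by simp
    next
      case False
      have "((\<lambda>t::real. t * \<bar>\<alpha> \<bullet> w\<bar>) \<longlongrightarrow> 0 * \<bar>\<alpha> \<bullet> w\<bar>) (at_right 0)"
        by (intro tendsto_intros)
      then have "eventually (\<lambda>t::real. t * \<bar>\<alpha> \<bullet> w\<bar> < \<bar>\<alpha> \<bullet> p\<bar>) (at_right 0)"
        using False by (intro order_tendstoD(2)) auto
      then show ?thesis by (rule eventually_mono) auto
    qed
  qed
  then have "eventually (\<lambda>t::real. \<forall>\<alpha>\<in>\<Phi>. \<alpha> \<bullet> p \<noteq> 0 \<longrightarrow> t * \<bar>\<alpha> \<bullet> w\<bar> < \<bar>\<alpha> \<bullet> p\<bar>) (at_right 0)"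
    by (rule eventually_ball_finite[OF assms])
  then have "\<exists>b>0. \<forall>y>0. y < b \<longrightarrow> (\<forall>\<alpha>\<in>\<Phi>. \<alpha> \<bullet> p \<noteq> 0 \<longrightarrow> y * \<bar>\<alpha> \<bullet> w\<bar> < \<bar>\<alpha> \<bullet> p\<bar>)"
    by (simp only: eventually_at_right_field)
  then obtain b :: real where b0: "b > 0" and bb: "\<forall>y>0. y < b \<longrightarrow> (\<forall>\<alpha>\<in>\<Phi>. \<alpha> \<bullet> p \<noteq> 0 \<longrightarrow> y * \<bar>\<alpha> \<bullet> w\<bar> < \<bar>\<alpha> \<bullet> p\<bar>)"
    by blast
  have "b/2 > 0" "b/2 < b" using b0 by auto
  then show ?thesis using bb by blast
qed

lemma sign_agree:
  fixes x y t :: real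
  assumes "x \<noteq> 0" "t * \<bar>y\<bar> < \<bar>x\<bar>" "t > 0"
  shows "x + t * y \<noteq> 0 \<and> (x + t * y > 0 \<longleftrightarrow> x > 0)"
proof -
  have "\<bar>t * y\<bar> < \<bar>x\<bar>" using assms by (simp add: abs_mult)
  then show ?thesis using assms(1) by (auto simp: abs_if split: if_splits)
qed

theorem theorem3p10:
  fixes \<Phi> :: "'a::euclidean_space set" and s :: "'a \<Rightarrow> 'a"
  assumes "reduced_root_system \<Phi>" and "s \<in> root_involutions \<Phi>"
  shows "(\<exists>C. S_chamber \<Phi> s C) \<and>
         (\<forall>C. weyl_chamber \<Phi> C \<longrightarrow>
            (S_chamber \<Phi> s C \<longleftrightarrow>
             (\<forall>\<alpha> \<in> simple_roots \<Phi> C \<inter> star_roots \<Phi> s. s \<alpha> \<in> pos_roots \<Phi> C)))"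
proof -
  have fin: "finite \<Phi>" and nz: "0 \<notin> \<Phi>" and refl: "\<forall>\<alpha>\<in>\<Phi>. \<forall>\<beta>\<in>\<Phi>. refl_vec \<alpha> \<beta> \<in> \<Phi>"
    using assms(1) unfolding reduced_root_system_def by auto
  have ot: "orthogonal_transformation s" and sPhi: "s ` \<Phi> = \<Phi>" and ss: "\<And>x. s (s x) = x"
    using assms(2) unfolding root_involutions_def root_automorphisms_def
    by (auto simp: fun_eq_iff)
  have lin: "linear s" using ot by (simp add: orthogonal_transformation_def)
  have sinner: "\<And>x y. s x \<bullet> s y = x \<bullet> y" using ot by (simp add: orthogonal_transformation_def)
  have sadd: "\<And>x y. s (x + y) = s x + s y" using lin by (simp add: linear_add)
  have sneg: "\<And>x. s (- x) = - s x" using lin by (simp add: linear_neg)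
  have sin: "\<And>x. x \<in> \<Phi> \<Longrightarrow> s x \<in> \<Phi>" using sPhi by auto
  have negin: "\<And>x. x \<in> \<Phi> \<Longrightarrow> - x \<in> \<Phi>"
  proof -
    fix x assume x: "x \<in> \<Phi>"
    then have "x \<noteq> 0" using nz by auto
    then have "x \<bullet> x \<noteq> 0" by simp
    then have "refl_vec x x = - x" unfolding refl_vec_def by (simp add: scaleR_2 algebra_simps)
    then show "- x \<in> \<Phi>" using refl x by metis
  qed
  have star_iff: "\<And>x. x \<in> star_roots \<Phi> s \<longleftrightarrow> x \<in> \<Phi> \<and> s x \<noteq> x \<and> s x \<noteq> - x"
    unfolding star_roots_def fixed_roots_def neg_roots_def by auto
  have ex: "\<exists>C. S_chamber \<Phi> s C"
  proof -
    let ?A = "(\<lambda>\<alpha>. \<alpha> + s \<alpha>) ` \<Phi> - {0}"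
    obtain q where q: "\<forall>a\<in>?A. a \<bullet> q \<noteq> 0" using avoid_hyperplanes[of ?A] fin by auto
    define p where "p = q + s q"
    have pprop: "\<And>\<alpha>. \<alpha> \<bullet> p = (\<alpha> + s \<alpha>) \<bullet> q"
    proof -
      fix \<alpha>
      have "\<alpha> \<bullet> s q = s \<alpha> \<bullet> q" using sinner[of "s \<alpha>" q] ss by simp
      then show "\<alpha> \<bullet> p = (\<alpha> + s \<alpha>) \<bullet> q" unfolding p_def by (simp add: inner_add_left inner_add_right)
    qed
    have pstar: "\<And>\<alpha>. \<alpha> \<in> star_roots \<Phi> s \<Longrightarrow> \<alpha> \<bullet> p \<noteq> 0"
    proof -
      fix \<alpha> assume a: "\<alpha> \<in> star_roots \<Phi> s"
      then have "\<alpha> + s \<alpha> \<noteq> 0" using star_iff by (metis add.commute add_eq_0_iff)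
      then have "\<alpha> + s \<alpha> \<in> ?A" using a star_iff by auto
      then show "\<alpha> \<bullet> p \<noteq> 0" using q pprop by auto
    qed
    have pinv: "\<And>\<alpha>. s \<alpha> \<bullet> p = \<alpha> \<bullet> p" using pprop ss by (simp add: add.commute)
    obtain w where w: "\<forall>a\<in>\<Phi>. a \<bullet> w \<noteq> 0" using avoid_hyperplanes[OF fin nz] by auto
    obtain t :: real where t: "t > 0" "\<forall>\<alpha>\<in>\<Phi>. \<alpha> \<bullet> p \<noteq> 0 \<longrightarrow> t * \<bar>\<alpha> \<bullet> w\<bar> < \<bar>\<alpha> \<bullet> p\<bar>"
      using small_t[OF fin] by blast
    define v where "v = p + t *\<^sub>R w"
    have vin: "\<And>\<alpha>. \<alpha> \<bullet> v = \<alpha> \<bullet> p + t * (\<alpha> \<bullet> w)" unfolding v_def by (simp add: inner_add_right)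
    have agree: "\<And>\<alpha>. \<alpha> \<in> \<Phi> \<Longrightarrow> \<alpha> \<bullet> p \<noteq> 0 \<Longrightarrow> \<alpha> \<bullet> v \<noteq> 0 \<and> (\<alpha> \<bullet> v > 0 \<longleftrightarrow> \<alpha> \<bullet> p > 0)"
      using sign_agree t vin by metis
    have vreg: "v \<in> regular_set \<Phi>"
      unfolding regular_set_def
    proof
      show "\<forall>\<alpha>\<in>\<Phi>. \<alpha> \<bullet> v \<noteq> 0"
      proof
        fix \<alpha> assume a: "\<alpha> \<in> \<Phi>"
        show "\<alpha> \<bullet> v \<noteq> 0"
        proof (cases "\<alpha> \<bullet> p = 0")
          case True then show ?thesis using vin w a t(1) by simp
        next
          case False then show ?thesis using agree a by blast
        qed
      qed
    qed
    define C where "C = connected_component_set (regular_set \<Phi>) v"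
    have Cc: "C \<in> components (regular_set \<Phi>)" unfolding C_def using componentsI[OF vreg] .
    have vC: "v \<in> C" unfolding C_def using vreg by simp
    have "S_chamber \<Phi> s C"
      unfolding S_chamber_def weyl_chamber_def
    proof (intro conjI Cc ballI)
      fix \<alpha> assume a: "\<alpha> \<in> pos_roots \<Phi> C \<inter> star_roots \<Phi> s"
      then have aP: "\<alpha> \<in> \<Phi>" and av: "\<alpha> \<bullet> v > 0" using vC unfolding pos_roots_def by auto
      have ap: "\<alpha> \<bullet> p \<noteq> 0" using pstar a by auto
      have "\<alpha> \<bullet> p > 0" using agree[OF aP ap] av by auto
      then have sp: "s \<alpha> \<bullet> p > 0" using pinv by simp
      have "s \<alpha> \<bullet> v > 0" using agree[OF sin[OF aP]] sp by auto
      then show "s \<alpha> \<in> pos_roots \<Phi> C" using sign_lemma[OF Cc vC sin[OF aP]] by auto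
    qed
    then show ?thesis by blast
  qed
  have eqv: "\<And>C. weyl_chamber \<Phi> C \<Longrightarrow>
            (S_chamber \<Phi> s C \<longleftrightarrow>
             (\<forall>\<alpha> \<in> simple_roots \<Phi> C \<inter> star_roots \<Phi> s. s \<alpha> \<in> pos_roots \<Phi> C))"
  proof -
    fix C assume wc: "weyl_chamber \<Phi> C"
    then have Cc: "C \<in> components (regular_set \<Phi>)" unfolding weyl_chamber_def .
    obtain v0 where v0: "v0 \<in> C" using in_components_nonempty[OF Cc] by auto
    have posv: "\<And>x. x \<in> pos_roots \<Phi> C \<Longrightarrow> x \<in> \<Phi> \<and> x \<bullet> v0 > 0"
      using v0 unfolding pos_roots_def by auto
    have pos_iff: "\<And>x. x \<in> \<Phi> \<Longrightarrow> x \<in> pos_roots \<Phi> C \<longleftrightarrow> x \<bullet> v0 > 0"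
      using posv sign_lemma[OF Cc v0] by blast
    have npos: "\<And>x. x \<in> \<Phi> \<Longrightarrow> x \<notin> pos_roots \<Phi> C \<Longrightarrow> x \<bullet> v0 < 0"
      using nonpos_neg[OF Cc v0] by blast
    show "S_chamber \<Phi> s C \<longleftrightarrow>
             (\<forall>\<alpha> \<in> simple_roots \<Phi> C \<inter> star_roots \<Phi> s. s \<alpha> \<in> pos_roots \<Phi> C)"
    proof
      assume "S_chamber \<Phi> s C"
      then show "\<forall>\<alpha> \<in> simple_roots \<Phi> C \<inter> star_roots \<Phi> s. s \<alpha> \<in> pos_roots \<Phi> C"
        unfolding S_chamber_def simple_roots_def by auto
    next
      assume H: "\<forall>\<alpha> \<in> simple_roots \<Phi> C \<inter> star_roots \<Phi> s. s \<alpha> \<in> pos_roots \<Phi> C"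
      define B where "B = {\<alpha> \<in> \<Phi>. \<alpha> \<in> pos_roots \<Phi> C \<and> \<alpha> \<in> star_roots \<Phi> s \<and> s \<alpha> \<notin> pos_roots \<Phi> C}"
      have "B = {}"
      proof (rule ccontr)
        assume Bne: "B \<noteq> {}"
        have finB: "finite B" unfolding B_def using fin by auto
        define h where "h = (\<lambda>x. x \<bullet> v0)"
        define m where "m = Min (h ` B)"
        have "m \<in> h ` B" unfolding m_def using finB Bne by auto
        then obtain \<alpha> where aB: "\<alpha> \<in> B" and ham: "h \<alpha> = m" by auto
        have minim: "\<And>x. x \<in> B \<Longrightarrow> h \<alpha> \<le> h x" unfolding ham m_def using finB by auto
        have aP: "\<alpha> \<in> \<Phi>" and apos: "\<alpha> \<in> pos_roots \<Phi> C" and astar: "\<alpha> \<in> star_roots \<Phi> s"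
          and asn: "s \<alpha> \<notin> pos_roots \<Phi> C" using aB unfolding B_def by auto
        have "\<alpha> \<notin> simple_roots \<Phi> C" using H astar asn by auto
        then obtain \<beta> \<gamma> where bp: "\<beta> \<in> pos_roots \<Phi> C" and gp: "\<gamma> \<in> pos_roots \<Phi> C"
          and abg: "\<alpha> = \<beta> + \<gamma>"
          using apos unfolding simple_roots_def by auto
        have bP: "\<beta> \<in> \<Phi>" and hb: "h \<beta> > 0" using posv[OF bp] h_def by auto
        have gP: "\<gamma> \<in> \<Phi>" and hg: "h \<gamma> > 0" using posv[OF gp] h_def by auto
        have hsum: "h \<alpha> = h \<beta> + h \<gamma>" unfolding h_def abg by (simp add: inner_add_left)
        have good: "\<And>x. x \<in> pos_roots \<Phi> C \<Longrightarrow> h x < h \<alpha> \<Longrightarrow> s x \<noteq> - x \<Longrightarrow> s x \<in> pos_roots \<Phi> C"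
        proof -
          fix x assume xp: "x \<in> pos_roots \<Phi> C" and hx: "h x < h \<alpha>" and xn: "s x \<noteq> - x"
          have xP: "x \<in> \<Phi>" using posv[OF xp] by auto
          show "s x \<in> pos_roots \<Phi> C"
          proof (cases "s x = x")
            case True then show ?thesis using xp by simp
          next
            case False
            then have "x \<in> star_roots \<Phi> s" using star_iff xP xn by auto
            show ?thesis
            proof (rule ccontr)
              assume "s x \<notin> pos_roots \<Phi> C"
              then have "x \<in> B" unfolding B_def using xp xP \<open>x \<in> star_roots \<Phi> s\<close> by auto
              then show False using minim hx by force
            qed
          qed
        qed
        have sa: "s \<alpha> = s \<beta> + s \<gamma>" using abg sadd by simp
        have hsa: "h (s \<alpha>) < 0" using npos[OF sin[OF aP] asn] h_def by simp
        have hs_sum: "h (s \<alpha>) = h (s \<beta>) + h (s \<gamma>)" unfolding h_def sa by (simp add: inner_add_left)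
        have sa_ne: "s \<alpha> \<noteq> \<alpha>" "s \<alpha> \<noteq> - \<alpha>" using astar star_iff by auto
        have reduce: "\<And>\<beta> \<gamma>. \<beta> \<in> pos_roots \<Phi> C \<Longrightarrow> \<gamma> \<in> pos_roots \<Phi> C \<Longrightarrow> \<alpha> = \<beta> + \<gamma> \<Longrightarrow>
                 s \<beta> = - \<beta> \<Longrightarrow> s \<gamma> \<noteq> - \<gamma> \<Longrightarrow> False"
        proof -
          fix \<beta> \<gamma> assume bp: "\<beta> \<in> pos_roots \<Phi> C" and gp: "\<gamma> \<in> pos_roots \<Phi> C" and abg: "\<alpha> = \<beta> + \<gamma>"
            and bn: "s \<beta> = - \<beta>" and gn: "s \<gamma> \<noteq> - \<gamma>"
          have hb: "h \<beta> > 0" and hg: "h \<gamma> > 0" using posv[OF bp] posv[OF gp] h_def by auto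
          have hsum: "h \<alpha> = h \<beta> + h \<gamma>" unfolding h_def abg by (simp add: inner_add_left)
          have sgp: "s \<gamma> \<in> pos_roots \<Phi> C" using good[OF gp _ gn] hsum hb by simp
          have hsg: "h (s \<gamma>) > 0" using posv[OF sgp] h_def by simp
          define a' where "a' = - s \<alpha>"
          have a'P: "a' \<in> \<Phi>" unfolding a'_def using negin sin aP by auto
          have ha': "h a' = h \<beta> - h (s \<gamma>)" unfolding a'_def h_def abg sadd bn by (simp add: inner_add_left inner_diff_left)
          have sa': "s a' = - \<alpha>" unfolding a'_def using sneg ss by simp
          have a'pos: "a' \<in> pos_roots \<Phi> C" using pos_iff[OF a'P] hsa h_def a'_def by simp
          have a'star: "a' \<in> star_roots \<Phi> s" using star_iff a'P sa' sa_ne unfolding a'_def by auto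
          have "h (s a') < 0" using sa' h_def hsum hb hg by simp
          then have "s a' \<notin> pos_roots \<Phi> C" using posv h_def by force
          then have "a' \<in> B" unfolding B_def using a'P a'pos a'star by auto
          then have "h \<alpha> \<le> h a'" by (rule minim)
          then show False using ha' hsum hg hsg by simp
        qed
        show False
        proof (cases "s \<beta> = - \<beta>")
          case bn: True
          show False
          proof (cases "s \<gamma> = - \<gamma>")
            case True
            then have "s \<alpha> = - \<alpha>" using sa bn abg by simp
            then show False using sa_ne by simp
          next
            case False then show False using reduce[OF bp gp abg bn] by simp
          qed
        next
          case bn: False
          show False
          proof (cases "s \<gamma> = - \<gamma>")
            case True then show False using reduce[OF gp bp _ True bn] abg by (simp add: add.commute)
          next
            case False
            have "s \<beta> \<in> pos_roots \<Phi> C" using good[OF bp _ bn] hsum hg by simp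
            moreover have "s \<gamma> \<in> pos_roots \<Phi> C" using good[OF gp _ False] hsum hb by simp
            ultimately have "h (s \<alpha>) > 0" using hs_sum posv h_def by (smt (verit))
            then show False using hsa by simp
          qed
        qed
      qed
      then show "S_chamber \<Phi> s C" unfolding S_chamber_def B_def using wc posv by auto
    qed
  qed
  show ?thesis using ex eqv by blast
qed

end
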